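(* Let $d \ge 1$ and let $S \subset \mathbb{R}^d$ be an arbitrary simplex with vertices $v_1, \dots, v_{d+1}$. For any real $t > 0$, any $y \in \mathbb{R}^d$ and any $R > \max_j |\langle v_j, y \rangle|$, \[ \hat{\chi}_{tS}(y) = \frac{(-1)^d d!}{(2\pi i)^{d+1}} \lambda(S) \int_{|z| = R} \frac{e^{-2\pi i z t}}{(z - \langle v_1, y\rangle) \cdots (z - \langle v_{d+1}, y \rangle)}\, dz, \] where the integral is a complex line integral along the positively oriented circle of radius $R$ centered at the origin.
   Context: $\lambda$ denotes Lebesgue measure on $\mathbb{R}^d$, $tS = \{tx : x \in S\}$, $\chi_{tS}$ is the characteristic function of $tS$, and $\hat{\chi}_{tS}(y) = \int_{tS} e^{-2\pi i \langle x, y \rangle}\, dx$. *)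

theory Defs
  imports "HOL-Analysis.Analysis" "HOL-Complex_Analysis.Complex_Analysis"
begin

definition fourier_char :: "(real^'n) set \<Rightarrow> real^'n \<Rightarrow> complex" where
  "fourier_char A y = integral A (\<lambda>x. exp (- (2 * of_real pi * \<i>) * of_real (x \<bullet> y)))"

end

theory Submission
  imports Defs
begin


fun hl :: "'a::comm_ring_1 list \<Rightarrow> nat \<Rightarrow> 'a" where
  "hl [] r = (if r = 0 then 1 else 0)"
| "hl (a # as) r = (\<Sum>b\<le>r. a ^ b * hl as (r - b))"

lemma hl_of_real: "hl (map of_real ws) r = (of_real (hl ws r) :: 'a::{real_algebra_1,comm_ring_1})"
  by (induction ws arbitrary: r) (auto simp: of_real_sum of_real_mult of_real_power)

lemma hl_gen:
  fixes ws :: "'a::{real_normed_field,banach} list"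
  assumes "\<forall>a\<in>set ws. norm (a * u) < 1"
  shows "(\<lambda>k. hl ws k * u ^ k) sums (\<Prod>a\<leftarrow>ws. 1 / (1 - a * u)) \<and> summable (\<lambda>k. norm (hl ws k * u ^ k))"
using assms
proof (induction ws)
  case Nil
  have "(\<lambda>k. hl ([]::'a list) k * u ^ k) = (\<lambda>k. if k = 0 then 1 else 0)" by auto
  moreover have "(\<lambda>k. norm (hl ([]::'a list) k * u ^ k)) = (\<lambda>k. if k = 0 then 1 else 0)" by auto
  ultimately show ?case using sums_single[of 0 "\<lambda>_. (1::'a)"] by auto
next
  case (Cons a as)
  define A where "A = (\<lambda>k. (a*u)^k)"
  define B where "B = (\<lambda>k. hl as k * u ^ k)"
  have na: "norm (a*u) < 1" using Cons.prems by auto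
  have IH: "B sums (\<Prod>a\<leftarrow>as. 1 / (1 - a * u))" "summable (\<lambda>k. norm (B k))"
    using Cons unfolding B_def by auto
  have sA: "summable (\<lambda>k. norm (A k))" unfolding A_def using na
    by (simp add: norm_power summable_geometric)
  have As: "A sums (1/(1 - a*u))" unfolding A_def using geometric_sums[OF na] .
  have eq: "(\<Sum>i\<le>k. A i * B (k - i)) = hl (a # as) k * u ^ k" for k
  proof -
    have "A i * B (k - i) = a ^ i * hl as (k - i) * u ^ k" if "i \<le> k" for i
    proof -
      have "u ^ i * u ^ (k - i) = u ^ k" using that by (simp add: power_add[symmetric])
      then show ?thesis unfolding A_def B_def by (simp add: power_mult_distrib algebra_simps)
    qed
    then show ?thesis by (simp add: sum_distrib_right)
  qed
  have "(\<lambda>k. \<Sum>i\<le>k. A i * B (k - i)) sums ((\<Sum>k. A k) * (\<Sum>k. B k))"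
    by (rule Cauchy_product_sums[OF sA IH(2)])
  then have s1: "(\<lambda>k. hl (a # as) k * u ^ k) sums (\<Prod>a\<leftarrow>a#as. 1 / (1 - a * u))"
    using eq IH(1) As by (simp add: sums_iff)
  have c1: "summable (\<lambda>k. \<Sum>i\<le>k. norm (A i) * norm (B (k - i)))"
    using summable_Cauchy_product[of "\<lambda>k. norm (A k)" "\<lambda>k. norm (B k)"] sA IH(2) by simp
  have c2: "norm (hl (a # as) k * u ^ k) \<le> (\<Sum>i\<le>k. norm (A i) * norm (B (k - i)))" for k
  proof -
    have "norm (hl (a # as) k * u ^ k) = norm (\<Sum>i\<le>k. A i * B (k - i))" by (simp add: eq)
    also have "\<dots> \<le> (\<Sum>i\<le>k. norm (A i * B (k - i)))" by (rule norm_sum)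
    also have "\<dots> = (\<Sum>i\<le>k. norm (A i) * norm (B (k - i)))" by (simp add: norm_mult)
    finally show ?thesis .
  qed
  have "summable (\<lambda>k. norm (hl (a # as) k * u ^ k))"
  proof (rule summable_comparison_test)
    show "\<exists>N. \<forall>n\<ge>N. norm (norm (hl (a # as) n * u ^ n)) \<le> (\<Sum>i\<le>n. norm (A i) * norm (B (n - i)))"
      using c2 by (intro exI[of _ 0]) simp
  qed (fact c1)
  with s1 show ?case by blast
qed


lemma deriv_exp_iter: "(deriv ^^ j) (\<lambda>z. exp (c*z)) = (\<lambda>z. c^j * exp (c*z :: complex))"
proof (induction j)
  case 0 then show ?case by simp
next
  case (Suc j)
  have dd: "deriv (\<lambda>z. c^j * exp (c*z)) z = c^Suc j * exp (c*z)" for z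
  proof (rule DERIV_imp_deriv)
    show "((\<lambda>z. c^j * exp (c*z)) has_field_derivative c^Suc j * exp (c*z)) (at z)"
      by (auto intro!: derivative_eq_intros simp: algebra_simps)
  qed
  have "(deriv ^^ Suc j) (\<lambda>z. exp (c*z)) = deriv (\<lambda>z. c^j * exp (c*z))" by (simp add: Suc.IH)
  also have "\<dots> = (\<lambda>z. c^Suc j * exp (c*z))" using dd by (simp add: fun_eq_iff)
  finally show ?case .
qed

lemma cauchy_exp_power:
  assumes "R > 0"
  shows "((\<lambda>z. exp (c*z) / z ^ Suc j) has_contour_integral (2 * pi * \<i> * c^j / fact j)) (circlepath 0 R)"
proof -
  have "((\<lambda>u. exp (c*u) / (u-0) ^ (Suc j)) has_contour_integral ((2 * pi * \<i>) / (fact j) * (deriv ^^ j) (\<lambda>z. exp (c*z)) 0)) (circlepath 0 R)"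
    by (rule Cauchy_has_contour_integral_higher_derivative_circlepath)
       (auto intro!: continuous_intros holomorphic_intros simp: assms)
  then show ?thesis by (simp add: deriv_exp_iter)
qed

lemma inv_prod_expand:
  fixes z :: complex
  assumes "z \<noteq> 0"
  shows "1 / (\<Prod>a\<leftarrow>ws. (z - a)) = (1/z) ^ length ws * (\<Prod>a\<leftarrow>ws. 1 / (1 - a * (1/z)))"
proof (induction ws)
  case Nil then show ?case by simp
next
  case (Cons a ws)
  have h: "1 / (z - a) = (1/z) * (1 / (1 - a * (1/z)))"
  proof (cases "z = a")
    case True then show ?thesis using assms by simp
  next
    case False then show ?thesis using assms by (simp add: field_simps)
  qed
  have "1 / (\<Prod>a\<leftarrow>a#ws. (z - a)) = (1/(z-a)) * (1/(\<Prod>a\<leftarrow>ws. (z-a)))" by simp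
  also have "\<dots> = ((1/z) * (1 / (1 - a * (1/z)))) * ((1/z) ^ length ws * (\<Prod>a\<leftarrow>ws. 1 / (1 - a * (1/z))))"
    by (simp only: h Cons)
  also have "\<dots> = (1/z) ^ length (a#ws) * (\<Prod>a\<leftarrow>a#ws. 1 / (1 - a * (1/z)))"
    by (simp only: list.size prod_list.Cons list.map power_Suc) (simp add: algebra_simps)
  finally show ?case .
qed

lemma contour_main:
  fixes ws :: "complex list" and c :: complex and R :: real
  assumes ne: "ws \<noteq> []" and wR: "\<forall>a\<in>set ws. norm a < R"
  shows "(\<lambda>k. 2*pi*\<i> * hl ws k * c^(k + length ws - 1) / fact (k + length ws - 1))
           sums contour_integral (circlepath 0 R) (\<lambda>z. exp (c*z) / (\<Prod>a\<leftarrow>ws. (z - a)))"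
proof -
  obtain a0 where a0: "a0 \<in> set ws" using ne by (cases ws) auto
  have "cmod a0 < R" using wR a0 by blast
  then have R: "R > 0" using norm_ge_zero[of a0] by linarith
  define n where "n = length ws"
  define m where "m = n - 1"
  have nm: "n = Suc m" using ne unfolding m_def n_def by (cases ws) auto
  define f where "f = (\<lambda>k z. hl ws k * (exp (c*z) / z ^ Suc (k + m)))"
  define F where "F = (\<lambda>z. exp (c*z) / (\<Prod>a\<leftarrow>ws. (z - a)))"
  have sums_on: "(\<lambda>k. f k z) sums F z" if z: "z \<in> sphere 0 R" for z
  proof -
    have nz: "norm z = R" "z \<noteq> 0" using z R by auto
    have "\<forall>a\<in>set ws. norm (a * (1/z)) < 1"
      using wR nz by (auto simp: norm_mult norm_divide field_simps)
    from hl_gen[OF this] have "(\<lambda>k. hl ws k * (1/z) ^ k) sums (\<Prod>a\<leftarrow>ws. 1 / (1 - a * (1/z)))" by blast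
    then have "(\<lambda>k. exp (c*z) * (1/z)^n * (hl ws k * (1/z) ^ k)) sums (exp (c*z) * (1/z)^n * (\<Prod>a\<leftarrow>ws. 1 / (1 - a * (1/z))))"
      by (rule sums_mult)
    moreover have "exp (c*z) * (1/z)^n * (\<Prod>a\<leftarrow>ws. 1 / (1 - a * (1/z))) = F z"
    proof -
      have "exp (c*z) * (1/z)^n * (\<Prod>a\<leftarrow>ws. 1 / (1 - a * (1/z))) = exp (c*z) * (1 / (\<Prod>a\<leftarrow>ws. (z - a)))"
        using inv_prod_expand[OF nz(2), of ws] by (simp only: n_def mult.assoc)
      then show ?thesis unfolding F_def by simp
    qed
    moreover have "exp (c*z) * (1/z)^n * (hl ws k * (1/z) ^ k) = f k z" for k
      unfolding f_def nm by (simp add: field_simps power_add)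
    ultimately show ?thesis by simp
  qed
  define M where "M = (\<lambda>k. exp (norm c * R) * (1/R)^n * norm (hl ws k * (complex_of_real (1/R)) ^ k))"
  have sM: "summable M"
  proof -
    have "\<forall>a\<in>set ws. norm (a * complex_of_real (1/R)) < 1"
      using wR R by (auto simp: norm_mult norm_divide field_simps)
    from hl_gen[OF this] show ?thesis unfolding M_def by (intro summable_mult) blast
  qed
  have bound: "norm (f k z) \<le> M k" if z: "z \<in> sphere 0 R" for k z
  proof -
    have nz: "norm z = R" using z by auto
    have e: "norm (exp (c*z)) \<le> exp (norm c * R)"
      using complex_Re_le_cmod[of "c*z"] nz by (simp add: norm_exp_eq_Re norm_mult)
    have "norm (f k z) = norm (hl ws k) * (norm (exp (c*z)) / R ^ Suc (k+m))"
      unfolding f_def by (simp add: norm_mult norm_divide norm_power nz)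
    also have "\<dots> \<le> norm (hl ws k) * (exp (norm c * R) / R ^ Suc (k+m))"
      using e R by (intro mult_left_mono divide_right_mono) auto
    also have "\<dots> = M k"
      unfolding M_def nm using R by (simp add: norm_mult norm_power norm_divide field_simps power_add)
    finally show ?thesis .
  qed
  have ul: "uniform_limit (sphere 0 R) (\<lambda>N z. \<Sum>k<N. f k z) (\<lambda>z. suminf (\<lambda>k. f k z)) sequentially"
    by (rule Weierstrass_m_test[OF bound sM])
  have hc: "(f k has_contour_integral (hl ws k * (2 * pi * \<i> * c^(k+m) / fact (k+m)))) (circlepath 0 R)" for k
    unfolding f_def by (intro has_contour_integral_lmul cauchy_exp_power R)
  have ev: "\<forall>\<^sub>F N in sequentially. (\<lambda>z. \<Sum>k<N. f k z) contour_integrable_on (circlepath 0 R)"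
    using hc by (intro always_eventually allI contour_integrable_sum) (auto simp: contour_integrable_on_def)
  have lim: "(\<lambda>N. contour_integral (circlepath 0 R) (\<lambda>z. \<Sum>k<N. f k z)) \<longlonglongrightarrow> contour_integral (circlepath 0 R) (\<lambda>z. suminf (\<lambda>k. f k z))"
    by (rule contour_integral_uniform_limit_circlepath(2)[OF ev ul]) (auto simp: R)
  have "contour_integral (circlepath 0 R) (\<lambda>z. \<Sum>k<N. f k z) = (\<Sum>k<N. 2*pi*\<i> * hl ws k * c^(k + length ws - 1) / fact (k + length ws - 1))" for N
  proof -
    have "contour_integral (circlepath 0 R) (\<lambda>z. \<Sum>k<N. f k z) = (\<Sum>k<N. contour_integral (circlepath 0 R) (f k))"
      using hc by (intro contour_integral_sum) (auto simp: contour_integrable_on_def)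
    also have "\<dots> = (\<Sum>k<N. 2*pi*\<i> * hl ws k * c^(k + length ws - 1) / fact (k + length ws - 1))"
    proof (intro sum.cong refl)
      fix k
      have "contour_integral (circlepath 0 R) (f k) = hl ws k * (2 * pi * \<i> * c^(k+m) / fact (k+m))"
        using hc[of k] by (rule contour_integral_unique)
      then show "contour_integral (circlepath 0 R) (f k) = 2*pi*\<i> * hl ws k * c^(k + length ws - 1) / fact (k + length ws - 1)"
        by (simp add: n_def[symmetric] nm)
    qed
    finally show ?thesis .
  qed
  moreover have "contour_integral (circlepath 0 R) (\<lambda>z. suminf (\<lambda>k. f k z)) = contour_integral (circlepath 0 R) F"
    using R sums_on by (intro contour_integral_eq) (auto simp: sums_iff)
  ultimately show ?thesis using lim unfolding sums_def F_def by simp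
qed


lemma beta_int:
  fixes L :: real
  assumes L: "L \<ge> 0"
  shows "(\<integral>y. indicator {0..L} y * ((L - y)^c * y^k) \<partial>lborel) = L^(c+k+1) * fact c * fact k / fact (c+k+1)"
  using L
proof (induction c arbitrary: k)
  case 0
  have "(\<integral>y. indicator {0..L} y * ((L - y)^0 * y^k) \<partial>lborel) = (\<integral>y. y^k * indicator {0..L} y \<partial>lborel)"
    by (simp add: mult.commute)
  also have "\<dots> = L^Suc k / Suc k" using integral_power[OF 0] by simp
  also have "\<dots> = L^(0+k+1) * fact 0 * fact k / fact (0+k+1)"
    by (simp add: fact_Suc field_simps del: of_nat_Suc)
  finally show ?case .
next
  case (Suc c k)
  have ibp: "(\<integral>y. indicator {0..L} y *\<^sub>R ((L - y)^Suc c * y^k) \<partial>lborel)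
     = (L - L)^Suc c * (L^Suc k / Suc k) - (L - 0)^Suc c * (0^Suc k / Suc k)
       - (\<integral>y. indicator {0..L} y *\<^sub>R ((- (Suc c * (L - y)^c)) * (y^Suc k / Suc k)) \<partial>lborel)"
  proof (rule integral_by_parts')
    show "DERIV (\<lambda>y. (L - y)^Suc c) y :> - (Suc c * (L - y)^c)" for y
    proof -
      have "DERIV (\<lambda>y. L - y) y :> -1" by (auto intro!: derivative_eq_intros)
      from DERIV_power_Suc[OF this, of c] show ?thesis by (simp add: algebra_simps)
    qed
    show "DERIV (\<lambda>y. y^Suc k / Suc k) y :> y^k" for y
    proof -
      have "DERIV (\<lambda>y. y) y :> 1" by (auto intro!: derivative_eq_intros)
      from DERIV_power_Suc[OF this, of k] have "DERIV (\<lambda>y. y^Suc k) y :> Suc k * y^k" by (simp add: algebra_simps)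
      from DERIV_cdivide[OF this, of "Suc k"] show ?thesis by (simp del: of_nat_Suc)
    qed
  qed (use Suc.prems in \<open>auto intro!: continuous_intros\<close>)
  have "(\<integral>y. indicator {0..L} y *\<^sub>R ((- (Suc c * (L - y)^c)) * (y^Suc k / Suc k)) \<partial>lborel)
       = (\<integral>y. (- (Suc c / Suc k)) * (indicator {0..L} y * ((L - y)^c * y^Suc k)) \<partial>lborel)"
    by (intro Bochner_Integration.integral_cong refl) (simp add: field_simps del: of_nat_Suc)
  also have "\<dots> = (- (Suc c / Suc k)) * (\<integral>y. indicator {0..L} y * ((L - y)^c * y^Suc k) \<partial>lborel)"
    by (rule integral_mult_right_zero)
  also have "\<dots> = (- (Suc c / Suc k)) * (L^(c+Suc k+1) * fact c * fact (Suc k) / fact (c+Suc k+1))"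
    by (simp only: Suc.IH[OF Suc.prems])
  finally have "(\<integral>y. indicator {0..L} y * ((L - y)^Suc c * y^k) \<partial>lborel)
      = (Suc c / Suc k) * (L^(c+Suc k+1) * fact c * fact (Suc k) / fact (c+Suc k+1))"
    using ibp by simp
  also have "\<dots> = L^(Suc c+k+1) * fact (Suc c) * fact k / fact (Suc c+k+1)"
    by (simp add: fact_Suc field_simps del: of_nat_Suc)
  finally show ?case .
qed


definition Dl :: "'i set \<Rightarrow> ('i \<Rightarrow> real) set" where
  "Dl J = {x. (\<forall>i\<in>J. 0 \<le> x i) \<and> sum x J \<le> 1}"

lemma Dl_sets:
  assumes "finite J"
  shows "Dl J \<inter> space (Pi\<^sub>M J (\<lambda>_. lborel)) \<in> sets (Pi\<^sub>M J (\<lambda>_. lborel))"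
proof -
  have "Dl J \<inter> space (Pi\<^sub>M J (\<lambda>_. lborel)) =
          Pi\<^sub>E J (\<lambda>_. {0..}) \<inter> (\<lambda>x. sum x J) -` {..1} \<inter> space (Pi\<^sub>M J (\<lambda>_. lborel))"
    by (auto simp: Dl_def space_PiM)
  also have "\<dots> \<in> sets (Pi\<^sub>M J (\<lambda>_. lborel))"
    using assms by measurable
  finally show ?thesis .
qed

lemma Dl_meas [measurable]:
  "finite J \<Longrightarrow> (indicator (Dl J) :: _ \<Rightarrow> real) \<in> borel_measurable (Pi\<^sub>M J (\<lambda>_. lborel))"
  using Dl_sets by (simp add: borel_measurable_indicator_iff)

lemma Dl_emeasure:
  "finite J \<Longrightarrow> emeasure (Pi\<^sub>M J (\<lambda>_. lborel)) (Dl J \<inter> space (Pi\<^sub>M J (\<lambda>_. lborel))) < \<infinity>"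
  using emeasure_std_simplex_aux[of J 1] by (simp add: Dl_def)

lemma int_Dl:
  fixes g :: "('i \<Rightarrow> real) \<Rightarrow> real"
  assumes fJ: "finite J" and g: "g \<in> borel_measurable (Pi\<^sub>M J (\<lambda>_. lborel))"
    and bnd: "\<And>x. x \<in> Dl J \<Longrightarrow> \<bar>g x\<bar> \<le> B"
  shows "integrable (Pi\<^sub>M J (\<lambda>_. lborel)) (\<lambda>x. indicator (Dl J) x * g x)"
proof (rule Bochner_Integration.integrable_bound[where f="\<lambda>x. indicator (Dl J \<inter> space (Pi\<^sub>M J (\<lambda>_. lborel :: real measure))) x *\<^sub>R B"])
  show "integrable (Pi\<^sub>M J (\<lambda>_. lborel)) (\<lambda>x. indicator (Dl J \<inter> space (Pi\<^sub>M J (\<lambda>_. lborel))) x *\<^sub>R B)"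
    using Dl_sets[OF fJ] Dl_emeasure[OF fJ] by (intro integrable_indicator) auto
  show "(\<lambda>x. indicator (Dl J) x * g x) \<in> borel_measurable (Pi\<^sub>M J (\<lambda>_. lborel))"
    using fJ g by measurable
  show "AE x in Pi\<^sub>M J (\<lambda>_. lborel). norm (indicator (Dl J) x * g x) \<le> norm (indicator (Dl J \<inter> space (Pi\<^sub>M J (\<lambda>_. lborel))) x *\<^sub>R B)"
    using bnd by (intro AE_I2) (force simp: indicator_def)
qed

lemma Dl_bound:
  assumes "finite K" "x \<in> Dl K"
  shows "\<bar>(1 - sum x K)^c * (\<Sum>i\<in>K. x i * \<omega> i)^r\<bar> \<le> (\<Sum>i\<in>K. \<bar>\<omega> i\<bar>)^r"
proof -
  have x0: "\<And>i. i \<in> K \<Longrightarrow> 0 \<le> x i" and s1: "sum x K \<le> 1" using assms by (auto simp: Dl_def)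
  have s0: "0 \<le> sum x K" using x0 by (simp add: sum_nonneg)
  have x1: "x i \<le> 1" if "i \<in> K" for i
    using member_le_sum[of i K x] x0 that assms(1) s1 by auto
  have "\<bar>1 - sum x K\<bar> ^ c \<le> 1" using s0 s1 by (intro power_le_one) auto
  moreover have "\<bar>\<Sum>i\<in>K. x i * \<omega> i\<bar> \<le> (\<Sum>i\<in>K. \<bar>\<omega> i\<bar>)"
  proof -
    have "\<bar>\<Sum>i\<in>K. x i * \<omega> i\<bar> \<le> (\<Sum>i\<in>K. \<bar>x i * \<omega> i\<bar>)" by (rule sum_abs)
    also have "\<dots> \<le> (\<Sum>i\<in>K. \<bar>\<omega> i\<bar>)"
    proof (intro sum_mono)
      fix i assume "i \<in> K"
      then have "\<bar>x i\<bar> \<le> 1" using x0 x1 by auto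
      then show "\<bar>x i * \<omega> i\<bar> \<le> \<bar>\<omega> i\<bar>" by (simp add: abs_mult mult_left_le_one_le)
    qed
    finally show ?thesis .
  qed
  ultimately have "\<bar>1 - sum x K\<bar> ^ c * \<bar>\<Sum>i\<in>K. x i * \<omega> i\<bar> ^ r \<le> 1 * (\<Sum>i\<in>K. \<bar>\<omega> i\<bar>)^r"
    by (intro mult_mono power_mono) auto
  then show ?thesis by (simp add: abs_mult power_abs)
qed

lemma inner1:
  fixes L a q :: real
  assumes L: "L \<ge> 0"
  shows "(\<integral>y. indicator {0..L} y * ((L - y)^c * (y * a + q)^r) \<partial>lborel)
       = (\<Sum>k\<le>r. of_nat (r choose k) * a^k * q^(r-k) * (L^(c+k+1) * fact c * fact k / fact (c+k+1)))"
proof -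
  have int: "integrable lborel (\<lambda>y. indicator {0..L} y * ((L - y)^c * y^k))" for k
  proof -
    have "continuous_on {0..L} (\<lambda>y. (L - y)^c * y^k)" by (intro continuous_intros)
    from borel_integrable_compact[OF compact_Icc this] show ?thesis by simp
  qed
  have "(\<integral>y. indicator {0..L} y * ((L - y)^c * (y * a + q)^r) \<partial>lborel)
      = (\<integral>y. (\<Sum>k\<le>r. (of_nat (r choose k) * a^k * q^(r-k)) * (indicator {0..L} y * ((L - y)^c * y^k))) \<partial>lborel)"
  proof (intro Bochner_Integration.integral_cong refl)
    fix y
    show "indicator {0..L} y * ((L - y)^c * (y * a + q)^r) = (\<Sum>k\<le>r. (of_nat (r choose k) * a^k * q^(r-k)) * (indicator {0..L} y * ((L - y)^c * y^k)))"
      by (subst binomial_ring) (simp add: sum_distrib_left sum_distrib_right power_mult_distrib algebra_simps)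
  qed
  also have "\<dots> = (\<Sum>k\<le>r. (of_nat (r choose k) * a^k * q^(r-k)) * (\<integral>y. indicator {0..L} y * ((L - y)^c * y^k) \<partial>lborel))"
    using int by (simp add: integral_sum)
  also have "\<dots> = (\<Sum>k\<le>r. of_nat (r choose k) * a^k * q^(r-k) * (L^(c+k+1) * fact c * fact k / fact (c+k+1)))"
    using beta_int[OF L] by simp
  finally show ?thesis .
qed


lemma G_formula:
  fixes \<omega> :: "'i \<Rightarrow> real"
  assumes "distinct bs"
  shows "(\<integral>x. indicator (Dl (set bs)) x * ((1 - sum x (set bs))^c * (\<Sum>i\<in>set bs. x i * \<omega> i)^r) \<partial>Pi\<^sub>M (set bs) (\<lambda>_. lborel))
         = fact c * fact r * hl (map \<omega> bs) r / fact (c + r + length bs)"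
  using assms
proof (induction bs arbitrary: c r)
  case Nil
  have "(\<integral>x. indicator (Dl (set [])) x * ((1 - sum x (set []))^c * (\<Sum>i\<in>set []. x i * \<omega> i)^r) \<partial>Pi\<^sub>M (set []) (\<lambda>_. lborel))
      = (\<integral>x. indicator (Dl {}) x * ((1 - sum x {})^c * (\<Sum>i\<in>{}. x i * \<omega> i)^r) \<partial>count_space {\<lambda>_. undefined})"
    by (simp add: PiM_empty)
  also have "\<dots> = (if r = 0 then 1 else 0)"
    by (simp add: lebesgue_integral_count_space_finite Dl_def)
  finally show ?case by simp
next
  case (Cons b bs)
  define J where "J = set bs"
  have bJ: "b \<notin> J" and fJ: "finite J" and dbs: "distinct bs" using Cons.prems by (auto simp: J_def)
  interpret product_sigma_finite "\<lambda>_::'i. lborel :: real measure" by standard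
  define Q where "Q = (\<lambda>x::'i\<Rightarrow>real. \<Sum>i\<in>J. x i * \<omega> i)"
  define L where "L = (\<lambda>x::'i\<Rightarrow>real. 1 - sum x J)"
  define F where "F = (\<lambda>x::'i\<Rightarrow>real. indicator (Dl (insert b J)) x * ((1 - sum x (insert b J))^c * (\<Sum>i\<in>insert b J. x i * \<omega> i)^r))"
  define coef where "coef = (\<lambda>k. of_nat (r choose k) * \<omega> b^k * (fact c * fact k / fact (c+k+1)) :: real)"
  have intF: "integrable (Pi\<^sub>M (insert b J) (\<lambda>_. lborel)) F"
    unfolding F_def using fJ
    by (intro int_Dl[where B="(\<Sum>i\<in>insert b J. \<bar>\<omega> i\<bar>)^r"] Dl_bound) (auto, measurable)
  have inner: "(\<integral>y. F (x(b:=y)) \<partial>lborel) = (\<Sum>k\<le>r. coef k * (indicator (Dl J) x * (L x^(c+k+1) * Q x^(r-k))))"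
    if x: "x \<in> space (Pi\<^sub>M J (\<lambda>_. lborel))" for x
  proof -
    have s1: "sum (x(b:=y)) (insert b J) = y + sum x J" for y
      using fJ bJ by (auto simp: sum.insert intro!: sum.cong)
    have s2: "(\<Sum>i\<in>insert b J. (x(b:=y)) i * \<omega> i) = y * \<omega> b + Q x" for y
      using fJ bJ unfolding Q_def by (auto simp: sum.insert intro!: sum.cong)
    have ind: "indicator (Dl (insert b J)) (x(b:=y)) = (indicator (Dl J) x * indicator {0..L x} y :: real)" for y
    proof -
      have "(\<forall>i\<in>insert b J. 0 \<le> (x(b:=y)) i) \<longleftrightarrow> 0 \<le> y \<and> (\<forall>i\<in>J. 0 \<le> x i)"
        using bJ by (auto split: if_splits)
      moreover have "x(b:=y) \<in> Dl (insert b J) \<longleftrightarrow> x \<in> Dl J \<and> y \<in> {0..L x}"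
        unfolding Dl_def L_def using s1[of y] bJ by (auto split: if_splits)
      then show ?thesis by (simp add: indicator_def)
    qed
    have Fx: "F (x(b:=y)) = indicator (Dl J) x * (indicator {0..L x} y * ((L x - y)^c * (y * \<omega> b + Q x)^r))" for y
      unfolding F_def ind s1 s2 L_def by (simp add: algebra_simps)
    show ?thesis
    proof (cases "x \<in> Dl J")
      case False
      then show ?thesis unfolding Fx by (simp add: indicator_def)
    next
      case True
      then have L0: "L x \<ge> 0" unfolding L_def Dl_def by auto
      have "(\<integral>y. F (x(b:=y)) \<partial>lborel) = (\<integral>y. indicator {0..L x} y * ((L x - y)^c * (y * \<omega> b + Q x)^r) \<partial>lborel)"
        unfolding Fx using True by simp
      also have "\<dots> = (\<Sum>k\<le>r. of_nat (r choose k) * \<omega> b^k * Q x^(r-k) * (L x^(c+k+1) * fact c * fact k / fact (c+k+1)))"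
        by (rule inner1[OF L0])
      also have "\<dots> = (\<Sum>k\<le>r. coef k * (indicator (Dl J) x * (L x^(c+k+1) * Q x^(r-k))))"
        using True unfolding coef_def by (intro sum.cong refl) (simp add: algebra_simps)
      finally show ?thesis .
    qed
  qed
  have intk: "integrable (Pi\<^sub>M J (\<lambda>_. lborel)) (\<lambda>x. indicator (Dl J) x * (L x^(c+k+1) * Q x^(r-k)))" for k
    unfolding L_def Q_def using fJ
    by (intro int_Dl[where B="(\<Sum>i\<in>J. \<bar>\<omega> i\<bar>)^(r-k)"] Dl_bound) (auto, measurable)
  have IH: "(\<integral>x. indicator (Dl J) x * (L x^(c+k+1) * Q x^(r-k)) \<partial>Pi\<^sub>M J (\<lambda>_. lborel))
       = fact (c+k+1) * fact (r-k) * hl (map \<omega> bs) (r-k) / fact (c+k+1 + (r-k) + length bs)" for k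
    using Cons.IH[OF dbs, of "c+k+1" "r-k"] unfolding J_def L_def Q_def by simp
  have "(\<integral>x. F x \<partial>Pi\<^sub>M (insert b J) (\<lambda>_. lborel)) = (\<integral>x. (\<integral>y. F (x(b:=y)) \<partial>lborel) \<partial>Pi\<^sub>M J (\<lambda>_. lborel))"
    by (rule product_integral_insert[OF fJ bJ intF])
  also have "\<dots> = (\<integral>x. (\<Sum>k\<le>r. coef k * (indicator (Dl J) x * (L x^(c+k+1) * Q x^(r-k)))) \<partial>Pi\<^sub>M J (\<lambda>_. lborel))"
    by (intro Bochner_Integration.integral_cong refl inner)
  also have "\<dots> = (\<Sum>k\<le>r. coef k * (\<integral>x. indicator (Dl J) x * (L x^(c+k+1) * Q x^(r-k)) \<partial>Pi\<^sub>M J (\<lambda>_. lborel)))"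
    using intk by (simp add: integral_sum)
  also have "\<dots> = (\<Sum>k\<le>r. \<omega> b^k * hl (map \<omega> bs) (r-k) * (fact c * fact r / fact (c + r + length (b#bs))))"
  proof (intro sum.cong refl)
    fix k assume k: "k \<in> {..r}"
    then have kr: "k \<le> r" by simp
    have e1: "c+k+1 + (r-k) + length bs = c + r + length (b#bs)" using kr by simp
    have e2: "of_nat (r choose k) * fact k * fact (r-k) = (fact r :: real)"
      using binomial_fact_lemma[OF kr] by (metis (mono_tags, lifting) mult.commute mult.left_commute of_nat_fact of_nat_mult)
    show "coef k * (\<integral>x. indicator (Dl J) x * (L x^(c+k+1) * Q x^(r-k)) \<partial>Pi\<^sub>M J (\<lambda>_. lborel))
        = \<omega> b^k * hl (map \<omega> bs) (r-k) * (fact c * fact r / fact (c + r + length (b#bs)))"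
    proof -
      define A :: real where "A = fact (c+k+1)"
      define D :: real where "D = fact (c + r + length (b#bs))"
      define C :: real where "C = of_nat (r choose k)"
      have A0: "A \<noteq> 0" unfolding A_def by simp
      have "coef k * (\<integral>x. indicator (Dl J) x * (L x^(c+k+1) * Q x^(r-k)) \<partial>Pi\<^sub>M J (\<lambda>_. lborel))
          = C * \<omega> b^k * (fact c * fact k / A) * (A * fact (r-k) * hl (map \<omega> bs) (r-k) / D)"
        unfolding IH coef_def e1 A_def D_def C_def by simp
      also have "\<dots> = \<omega> b^k * hl (map \<omega> bs) (r-k) * (fact c * (C * fact k * fact (r-k)) / D)"
        using A0 by (simp add: field_simps)
      also have "\<dots> = \<omega> b^k * hl (map \<omega> bs) (r-k) * (fact c * fact r / fact (c + r + length (b#bs)))"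
        unfolding C_def e2 D_def by simp
      finally show ?thesis .
    qed
  qed
  also have "\<dots> = (\<Sum>k\<le>r. \<omega> b^k * hl (map \<omega> bs) (r-k)) * (fact c * fact r / fact (c + r + length (b#bs)))"
    by (rule sum_distrib_right[symmetric])
  also have "\<dots> = hl (map \<omega> (b#bs)) r * (fact c * fact r / fact (c + r + length (b#bs)))"
    by (simp only: list.map hl.simps)
  also have "\<dots> = fact c * fact r * hl (map \<omega> (b#bs)) r / fact (c + r + length (b#bs))"
    by (simp only: times_divide_eq_right ac_simps)
  finally show ?case unfolding F_def J_def by simp
qed


lemma moment_std:
  fixes \<omega> :: "'a::euclidean_space \<Rightarrow> real" and w0 :: real
  assumes dbs: "distinct bs" and sbs: "set bs = Basis"
  shows "(\<integral>x. indicator (convex hull (insert 0 Basis)) x * (w0 + (\<Sum>b\<in>Basis. (x \<bullet> b) * (\<omega> b - w0)))^m \<partial>lborel)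
         = fact m * hl (w0 # map \<omega> bs) m / fact (m + DIM('a))"
proof -
  define T where "T = (\<lambda>f::'a\<Rightarrow>real. \<Sum>b\<in>Basis. f b *\<^sub>R b)"
  define P where "P = (Pi\<^sub>M Basis (\<lambda>_::'a. lborel :: real measure))"
  have Tb: "T f \<bullet> i = f i" if "i \<in> Basis" for f i
    unfolding T_def using that by (simp add: inner_sum_left inner_Basis if_distrib cong: if_cong)
  have len: "length bs = DIM('a)" using distinct_card[OF dbs] sbs by simp
  have Tm: "T \<in> measurable P borel" unfolding T_def P_def by measurable
  have "(\<integral>x. indicator (convex hull (insert 0 Basis)) x * (w0 + (\<Sum>b\<in>Basis. (x \<bullet> b) * (\<omega> b - w0)))^m \<partial>lborel)
      = (\<integral>x. indicator (convex hull (insert 0 Basis)) x * (w0 + (\<Sum>b\<in>Basis. (x \<bullet> b) * (\<omega> b - w0)))^m \<partial>distr P borel T)"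
    unfolding P_def T_def by (subst lborel_eq) simp
  also have "\<dots> = (\<integral>f. indicator (convex hull (insert 0 Basis)) (T f) * (w0 + (\<Sum>b\<in>Basis. (T f \<bullet> b) * (\<omega> b - w0)))^m \<partial>P)"
  proof (rule integral_distr[OF Tm])
    have hb: "convex hull insert 0 Basis \<in> sets (borel :: 'a measure)"
      by (intro borel_closed compact_imp_closed finite_imp_compact_convex_hull) auto
    show "(\<lambda>x. indicator (convex hull (insert 0 Basis)) x * (w0 + (\<Sum>b\<in>Basis. (x \<bullet> b) * (\<omega> b - w0)))^m) \<in> borel_measurable borel"
      by (intro borel_measurable_times borel_measurable_indicator hb borel_measurable_continuous_onI continuous_intros)
  qed
  also have "\<dots> = (\<integral>f. indicator (Dl Basis) f * ((1 - sum f Basis) * w0 + (\<Sum>b\<in>Basis. f b * \<omega> b))^m \<partial>P)"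
  proof (intro Bochner_Integration.integral_cong refl)
    fix f :: "'a \<Rightarrow> real"
    have "T f \<in> convex hull (insert 0 Basis) \<longleftrightarrow> f \<in> Dl Basis"
      unfolding std_simplex Dl_def using Tb by (simp cong: ball_cong sum.cong)
    moreover have "w0 + (\<Sum>b\<in>Basis. (T f \<bullet> b) * (\<omega> b - w0)) = (1 - sum f Basis) * w0 + (\<Sum>b\<in>Basis. f b * \<omega> b)"
      using Tb by (simp add: algebra_simps sum_subtractf sum_distrib_right sum_distrib_left)
    ultimately show "indicator (convex hull (insert 0 Basis)) (T f) * (w0 + (\<Sum>b\<in>Basis. (T f \<bullet> b) * (\<omega> b - w0)))^m
        = indicator (Dl Basis) f * ((1 - sum f Basis) * w0 + (\<Sum>b\<in>Basis. f b * \<omega> b))^m"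
      by (simp add: indicator_def)
  qed
  also have "\<dots> = (\<integral>f. (\<Sum>c\<le>m. (of_nat (m choose c) * w0^c) * (indicator (Dl Basis) f * ((1 - sum f Basis)^c * (\<Sum>b\<in>Basis. f b * \<omega> b)^(m-c)))) \<partial>P)"
    by (intro Bochner_Integration.integral_cong refl)
       (simp only: binomial_ring sum_distrib_left power_mult_distrib ac_simps)
  also have "\<dots> = (\<Sum>c\<le>m. (\<integral>f. (of_nat (m choose c) * w0^c) * (indicator (Dl Basis) f * ((1 - sum f Basis)^c * (\<Sum>b\<in>Basis. f b * \<omega> b)^(m-c))) \<partial>P))"
  proof (rule Bochner_Integration.integral_sum)
    fix c
    show "integrable P (\<lambda>f. (of_nat (m choose c) * w0^c) * (indicator (Dl Basis) f * ((1 - sum f Basis)^c * (\<Sum>b\<in>Basis. f b * \<omega> b)^(m-c))))"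
      unfolding P_def
      by (intro integrable_mult_right int_Dl[where B="(\<Sum>i\<in>Basis. \<bar>\<omega> i\<bar>)^(m-c)"] Dl_bound) (auto, measurable)
  qed
  also have "\<dots> = (\<Sum>c\<le>m. (of_nat (m choose c) * w0^c) * (\<integral>f. indicator (Dl Basis) f * ((1 - sum f Basis)^c * (\<Sum>b\<in>Basis. f b * \<omega> b)^(m-c)) \<partial>P))"
    by (simp only: integral_mult_right_zero)
  also have "\<dots> = (\<Sum>c\<le>m. w0^c * hl (map \<omega> bs) (m-c) * (fact m / fact (m + DIM('a))))"
  proof (intro sum.cong refl)
    fix c assume "c \<in> {..m}"
    then have cm: "c \<le> m" by simp
    have G: "(\<integral>f. indicator (Dl Basis) f * ((1 - sum f Basis)^c * (\<Sum>b\<in>Basis. f b * \<omega> b)^(m-c)) \<partial>P)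
        = fact c * fact (m-c) * hl (map \<omega> bs) (m-c) / fact (c + (m-c) + length bs)"
      using G_formula[OF dbs, where c=c and r="m-c" and \<omega>=\<omega>] unfolding sbs P_def .
    have e2: "of_nat (m choose c) * fact c * fact (m-c) = (fact m :: real)"
      using binomial_fact_lemma[OF cm] by (metis (mono_tags, lifting) mult.commute mult.left_commute of_nat_fact of_nat_mult)
    have e1: "c + (m-c) + length bs = m + DIM('a)" using cm len by simp
    define D :: real where "D = fact (m + DIM('a))"
    show "(of_nat (m choose c) * w0^c) * (\<integral>f. indicator (Dl Basis) f * ((1 - sum f Basis)^c * (\<Sum>b\<in>Basis. f b * \<omega> b)^(m-c)) \<partial>P)
        = w0^c * hl (map \<omega> bs) (m-c) * (fact m / fact (m + DIM('a)))"
      unfolding G e1 e2[symmetric] D_def[symmetric] by (simp add: field_simps)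
  qed
  also have "\<dots> = (\<Sum>c\<le>m. w0^c * hl (map \<omega> bs) (m-c)) * (fact m / fact (m + DIM('a)))"
    by (rule sum_distrib_right[symmetric])
  also have "\<dots> = fact m * hl (w0 # map \<omega> bs) m / fact (m + DIM('a))"
    by (simp only: hl.simps times_divide_eq_right times_divide_eq_left ac_simps)
  finally show ?thesis .
qed


typedef 'a wo = "UNIV :: 'a set" by auto

instance wo :: (finite) finite
proof
  have "(UNIV :: 'a wo set) = Abs_wo ` UNIV" by (metis Abs_wo_cases surj_def)
  then show "finite (UNIV :: 'a wo set)" by (metis finite finite_imageI)
qed

instantiation wo :: (finite) linorder
begin
definition less_eq_wo :: "'a wo \<Rightarrow> 'a wo \<Rightarrow> bool" where
  "less_eq_wo x y \<longleftrightarrow> to_nat (Rep_wo x) \<le> to_nat (Rep_wo y)"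
definition less_wo :: "'a wo \<Rightarrow> 'a wo \<Rightarrow> bool" where
  "less_wo x y \<longleftrightarrow> to_nat (Rep_wo x) < to_nat (Rep_wo y)"
instance
proof
  fix x y z :: "'a wo"
  show "(x < y) = (x \<le> y \<and> \<not> y \<le> x)" unfolding less_eq_wo_def less_wo_def by auto
  show "x \<le> x" unfolding less_eq_wo_def by auto
  show "x \<le> y \<Longrightarrow> y \<le> z \<Longrightarrow> x \<le> z" unfolding less_eq_wo_def by auto
  show "x \<le> y \<Longrightarrow> y \<le> x \<Longrightarrow> x = y" unfolding less_eq_wo_def
    by (metis Rep_wo_inject antisym to_nat_split)
  show "x \<le> y \<or> y \<le> x" unfolding less_eq_wo_def by auto
qed
end

instance wo :: (finite) wellorder
proof
  fix P :: "'a wo \<Rightarrow> bool" and a :: "'a wo"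
  assume H: "\<And>x. (\<And>y. y < x \<Longrightarrow> P y) \<Longrightarrow> P x"
  show "P a"
  proof (induction a rule: measure_induct_rule[where f="\<lambda>x. to_nat (Rep_wo x)"])
    case (less x)
    then show ?case using H unfolding less_wo_def by blast
  qed
qed

definition phi :: "real^'n \<Rightarrow> real^('n wo)" where
  "phi x = (\<chi> i. x $ Rep_wo i)"
definition psi :: "real^('n wo) \<Rightarrow> real^'n" where
  "psi y = (\<chi> j. y $ Abs_wo j)"

lemma phi_psi [simp]: "phi (psi y) = y" and psi_phi [simp]: "psi (phi x) = x"
  unfolding phi_def psi_def by (auto simp: vec_eq_iff Rep_wo_inverse Abs_wo_inverse)

lemma linear_phi: "linear phi" and linear_psi: "linear psi"
  unfolding phi_def psi_def by (auto intro!: linearI simp: vec_eq_iff)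

lemma inj_phi: "inj phi" by (metis injI psi_phi)

lemma prod_Basis_cart: "(\<Prod>b\<in>Basis. (x::real^'m) \<bullet> b) = (\<Prod>i\<in>UNIV. x $ i)"
proof -
  have B: "(Basis :: (real^'m) set) = (\<lambda>i. axis i 1) ` UNIV"
    unfolding Basis_vec_def by auto
  have "inj (\<lambda>i::'m. axis i (1::real))" by (auto intro!: injI simp: axis_eq_axis)
  then show ?thesis unfolding B by (simp add: prod.reindex inner_axis)
qed

lemma distr_phi: "distr lborel borel (phi :: real^'n::finite \<Rightarrow> real^('n wo)) = lborel"
proof (rule lborel_eqI[symmetric])
  have mphi: "phi \<in> borel_measurable (borel :: (real^'n) measure)"
    using linear_phi by (intro borel_measurable_continuous_onI linear_continuous_on linear_conv_bounded_linear[THEN iffD1])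
  fix l u :: "real^('n wo)"
  assume le: "\<And>b. b \<in> Basis \<Longrightarrow> l \<bullet> b \<le> u \<bullet> b"
  have pre: "phi -` box l u = box (psi l) (psi u)"
    by (auto simp: mem_box_cart phi_def psi_def) (metis Abs_wo_inverse UNIV_I Rep_wo_inverse)+
  have le2: "psi l \<bullet> b \<le> psi u \<bullet> b" if "b \<in> Basis" for b
  proof -
    from that obtain j where b: "b = axis j 1" unfolding Basis_vec_def by auto
    have "l \<bullet> axis (Abs_wo j) 1 \<le> u \<bullet> axis (Abs_wo j) 1" by (rule le) (auto simp: Basis_vec_def)
    then show ?thesis by (simp add: b inner_axis psi_def)
  qed
  have "emeasure (distr lborel borel phi) (box l u) = emeasure lborel (phi -` box l u)"
    using mphi by (simp add: emeasure_distr)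
  also have "\<dots> = (\<Prod>b\<in>Basis. (psi u - psi l) \<bullet> b)"
    unfolding pre using le2 by (simp add: emeasure_lborel_box)
  also have "(\<Prod>b\<in>Basis. (psi u - psi l) \<bullet> b) = (\<Prod>b\<in>Basis. (u - l) \<bullet> b)"
  proof -
    have "(\<Prod>j\<in>UNIV. (psi u - psi l) $ j) = (\<Prod>i\<in>UNIV. (u - l) $ i)"
    proof (rule prod.reindex_bij_witness[where i=Rep_wo and j=Abs_wo])
    qed (auto simp: psi_def Rep_wo_inverse Abs_wo_inverse)
    then show ?thesis by (simp add: prod_Basis_cart)
  qed
  finally show "emeasure (distr lborel borel phi) (box l u) = (\<Prod>b\<in>Basis. (u - l) \<bullet> b)" .
next
  show "sets (distr lborel borel (phi :: real^'n \<Rightarrow> real^('n wo))) = sets borel" by simp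
qed

lemma hk_lborel:
  fixes f :: "'a::euclidean_space \<Rightarrow> real"
  assumes "compact S" "continuous_on S f"
  shows "integral S f = (\<integral>x. indicator S x * f x \<partial>lborel)"
proof -
  have "set_integrable lborel S f"
    using borel_integrable_compact[OF assms] by (simp add: set_integrable_def)
  from set_borel_integral_eq_integral(2)[OF this] show ?thesis
    by (simp add: set_lebesgue_integral_def)
qed

lemma TR:
  fixes h :: "real^('n::finite wo) \<Rightarrow> real"
  assumes A: "compact A" and h: "continuous_on UNIV h"
  shows "integral (phi ` A) h = integral A (\<lambda>x. h (phi x))"
proof -
  have cphi: "continuous_on UNIV phi"
    using linear_phi by (intro linear_continuous_on linear_conv_bounded_linear[THEN iffD1])
  have cA: "compact (phi ` A)" by (intro compact_continuous_image A continuous_on_subset[OF cphi]) auto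
  have mphi: "phi \<in> borel_measurable (borel :: (real^'n) measure)"
    using cphi by (rule borel_measurable_continuous_onI)
  have "integral (phi ` A) h = (\<integral>y. indicator (phi ` A) y * h y \<partial>lborel)"
    using cA h by (intro hk_lborel) (auto intro: continuous_on_subset)
  also have "\<dots> = (\<integral>y. indicator (phi ` A) y * h y \<partial>distr lborel borel phi)"
    by (simp add: distr_phi)
  also have "\<dots> = (\<integral>x. indicator (phi ` A) (phi x) * h (phi x) \<partial>lborel)"
  proof (rule integral_distr)
    show "(phi :: real^'n \<Rightarrow> real^('n wo)) \<in> lborel \<rightarrow>\<^sub>M borel" using mphi by simp
    have "phi ` A \<in> sets borel" using cA by (intro borel_closed compact_imp_closed)
    then show "(\<lambda>y. indicator (phi ` A) y * h y) \<in> borel_measurable borel"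
      using h by (intro borel_measurable_times borel_measurable_indicator borel_measurable_continuous_onI)
  qed
  also have "\<dots> = (\<integral>x. indicator A x * h (phi x) \<partial>lborel)"
  proof (intro Bochner_Integration.integral_cong refl)
    fix x :: "real^'n"
    have "phi x \<in> phi ` A \<longleftrightarrow> x \<in> A" by (metis image_iff psi_phi)
    then show "indicator (phi ` A) (phi x) * h (phi x) = indicator A x * h (phi x)" by (simp add: indicator_def)
  qed
  also have "\<dots> = integral A (\<lambda>x. h (phi x))"
    using A h cphi by (intro hk_lborel[symmetric] continuous_on_compose2[OF h]) (auto intro: continuous_on_subset)
  finally show ?thesis .
qed


lemma abs_int_compact:
  fixes h :: "'a::euclidean_space \<Rightarrow> 'b::euclidean_space"
  assumes "compact S" "continuous_on S h"
  shows "h absolutely_integrable_on S"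
proof -
  have i: "integrable lborel (\<lambda>x. indicator S x *\<^sub>R h x)"
    by (rule borel_integrable_compact[OF assms])
  have "(\<lambda>x. indicator S x *\<^sub>R h x) \<in> borel_measurable lborel"
    using i by (rule borel_measurable_integrable)
  then have "integrable lebesgue (\<lambda>x. indicator S x *\<^sub>R h x)"
    using i by (simp add: integrable_completion)
  then show ?thesis by (simp add: set_integrable_def)
qed

lemma K_wo:
  fixes L :: "real^'m::{finite,wellorder} \<Rightarrow> real^'m::_"
  assumes lin: "linear L"
  shows "\<exists>c\<ge>0. \<forall>T a (f::real^'m::_ \<Rightarrow> real). compact T \<longrightarrow> continuous_on UNIV f \<longrightarrow>
           integral ((\<lambda>x. a + L x) ` T) f = c * integral T (\<lambda>x. f (a + L x))"
proof (intro exI[of _ "\<bar>det (matrix L)\<bar>"] conjI allI impI)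
  show "0 \<le> \<bar>det (matrix L)\<bar>" by simp
  fix T :: "(real^'m::_) set" and a :: "real^'m::_" and f :: "real^'m::_ \<Rightarrow> real"
  assume T: "compact T" and f: "continuous_on UNIV f"
  define g where "g = (\<lambda>x. a + L x)"
  have cL: "continuous_on UNIV L" using lin by (intro linear_continuous_on linear_conv_bounded_linear[THEN iffD1])
  have cg: "continuous_on UNIV g" unfolding g_def by (intro continuous_intros cL)
  have gT: "compact (g ` T)" by (intro compact_continuous_image T continuous_on_subset[OF cg]) auto
  show "integral ((\<lambda>x. a + L x) ` T) f = \<bar>det (matrix L)\<bar> * integral T (\<lambda>x. f (a + L x))"
  proof (cases "inj L")
    case False
    then have d0: "det (matrix L) = 0" using det_nz_iff_inj[OF lin] by blast
    have "negligible (L ` T)" by (rule negligible_linear_singular_image[OF lin False])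
    then have "negligible ((+) a ` (L ` T))" by (rule negligible_translation)
    moreover have "(+) a ` (L ` T) = (\<lambda>x. a + L x) ` T" by auto
    ultimately have "negligible ((\<lambda>x. a + L x) ` T)" by simp
    then have "(f has_integral 0) ((\<lambda>x. a + L x) ` T)" by (rule has_integral_negligible) auto
    then show ?thesis using d0 by (simp add: integral_unique)
  next
    case True
    define f1 where "f1 = (\<lambda>x. (\<chi> i. f x) :: real^1)"
    have cf1: "continuous_on UNIV f1" unfolding f1_def using f
      by (intro continuous_on_vec_lambda) auto
    have Tl: "T \<in> sets lebesgue" using T by (simp add: lmeasurable_compact fmeasurableD)
    have der: "(g has_derivative L) (at x within T)" for x
      unfolding g_def using has_derivative_add_const[OF linear_imp_has_derivative[OF lin], of a]
      by (simp add: add.commute)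
    have inj: "inj_on g T" using True unfolding g_def by (auto simp: inj_on_def dest: injD)
    have ai: "f1 absolutely_integrable_on (g ` T)"
      by (intro abs_int_compact gT continuous_on_subset[OF cf1]) auto
    have cv: "integral (g ` T) f1 = integral T (\<lambda>x. \<bar>det (matrix L)\<bar> *\<^sub>R f1 (g x))"
      by (rule integral_change_of_variables[OF Tl der inj]) (use ai in blast)
    have i1: "f1 integrable_on (g ` T)" using ai by (simp add: absolutely_integrable_on_def)
    have i2: "(\<lambda>x. \<bar>det (matrix L)\<bar> *\<^sub>R f1 (g x)) integrable_on T"
    proof -
      have "continuous_on T (\<lambda>x. f1 (g x))" by (rule continuous_on_compose2[OF cf1 continuous_on_subset[OF cg]]) auto
      then have "continuous_on T (\<lambda>x. \<bar>det (matrix L)\<bar> *\<^sub>R f1 (g x))" by (intro continuous_intros)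
      from abs_int_compact[OF T this] show ?thesis by (simp add: absolutely_integrable_on_def)
    qed
    have "integral (g ` T) f = integral (g ` T) (\<lambda>x. f1 x $ 1)" by (simp add: f1_def)
    also have "\<dots> = integral (g ` T) f1 $ 1" by (rule integral_component_eq_cart[OF i1])
    also have "\<dots> = integral T (\<lambda>x. \<bar>det (matrix L)\<bar> *\<^sub>R f1 (g x)) $ 1" by (simp add: cv)
    also have "\<dots> = integral T (\<lambda>x. (\<bar>det (matrix L)\<bar> *\<^sub>R f1 (g x)) $ 1)"
      by (rule integral_component_eq_cart[OF i2, symmetric])
    also have "\<dots> = integral T (\<lambda>x. \<bar>det (matrix L)\<bar> * f (g x))" by (simp add: f1_def)
    also have "\<dots> = \<bar>det (matrix L)\<bar> * integral T (\<lambda>x. f (g x))"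
      using integral_cmul[of T "\<bar>det (matrix L)\<bar>" "\<lambda>x. f (g x)"] by simp
    finally show ?thesis unfolding g_def .
  qed
qed

lemma K_gen:
  fixes L :: "real^'n::finite \<Rightarrow> real^'n"
  assumes lin: "linear L"
  shows "\<exists>c\<ge>0. \<forall>T a (f::real^'n \<Rightarrow> real). compact T \<longrightarrow> continuous_on UNIV f \<longrightarrow>
           integral ((\<lambda>x. a + L x) ` T) f = c * integral T (\<lambda>x. f (a + L x))"
proof -
  define L' where "L' = (\<lambda>y. phi (L (psi y)))"
  have lin': "linear L'" unfolding L'_def
    using linear_compose[OF linear_compose[OF linear_psi lin] linear_phi] by (simp add: o_def)
  obtain c where c: "c \<ge> 0" and K: "\<And>T a (f::real^('n wo) \<Rightarrow> real). compact T \<Longrightarrow> continuous_on UNIV f \<Longrightarrow>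
           integral ((\<lambda>x. a + L' x) ` T) f = c * integral T (\<lambda>x. f (a + L' x))"
    using K_wo[OF lin'] by blast
  have cpsi: "continuous_on UNIV psi" using linear_psi by (intro linear_continuous_on linear_conv_bounded_linear[THEN iffD1])
  have cphi: "continuous_on UNIV phi" using linear_phi by (intro linear_continuous_on linear_conv_bounded_linear[THEN iffD1])
  have cL: "continuous_on UNIV L" using lin by (intro linear_continuous_on linear_conv_bounded_linear[THEN iffD1])
  show ?thesis
  proof (intro exI[of _ c] conjI c allI impI)
    fix T :: "(real^'n) set" and a :: "real^'n" and f :: "real^'n \<Rightarrow> real"
    assume T: "compact T" and f: "continuous_on UNIV f"
    define g where "g = (\<lambda>x. a + L x)"
    have cg: "continuous_on UNIV g" unfolding g_def by (intro continuous_intros cL)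
    have gT: "compact (g ` T)" by (intro compact_continuous_image T continuous_on_subset[OF cg]) auto
    have pT: "compact (phi ` T)" by (intro compact_continuous_image T continuous_on_subset[OF cphi]) auto
    have h: "continuous_on UNIV (\<lambda>y. f (psi y))" by (rule continuous_on_compose2[OF f cpsi]) auto
    have "integral (g ` T) f = integral (g ` T) (\<lambda>x. f (psi (phi x)))" by simp
    also have "\<dots> = integral (phi ` (g ` T)) (\<lambda>y. f (psi y))" by (rule TR[OF gT h, symmetric])
    also have "phi ` (g ` T) = (\<lambda>y. phi a + L' y) ` (phi ` T)"
      unfolding g_def L'_def by (auto simp: image_image linear_add[OF linear_phi])
    also have "integral \<dots> (\<lambda>y. f (psi y)) = c * integral (phi ` T) (\<lambda>y. f (psi (phi a + L' y)))"
      by (rule K[OF pT h])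
    also have "integral (phi ` T) (\<lambda>y. f (psi (phi a + L' y))) = integral (phi ` T) (\<lambda>y. f (a + L (psi y)))"
      unfolding L'_def by (simp add: linear_add[OF linear_psi])
    also have "\<dots> = integral T (\<lambda>x. f (a + L (psi (phi x))))"
    proof (rule TR[OF T])
      show "continuous_on UNIV (\<lambda>y. f (a + L (psi y)))"
        by (intro continuous_on_compose2[OF f] continuous_intros continuous_on_compose2[OF cL cpsi]) auto
    qed
    finally show "integral ((\<lambda>x. a + L x) ` T) f = c * integral T (\<lambda>x. f (a + L x))" unfolding g_def by simp
  qed
qed


lemma exp_partial_le:
  fixes r :: real assumes "r \<ge> 0"
  shows "(\<Sum>m<N. r^m / fact m) \<le> exp r"
proof -
  have s: "(\<lambda>n. r^n /\<^sub>R fact n) sums exp r" by (rule exp_converges)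
  have "(\<Sum>m<N. r^m /\<^sub>R fact m) \<le> suminf (\<lambda>n. r^n /\<^sub>R fact n)"
    using s assms by (intro sum_le_suminf) (auto simp: sums_iff)
  then show ?thesis using s by (simp add: sums_iff divide_inverse mult.commute)
qed

lemma fourier_series:
  fixes A :: "'a::euclidean_space set" and y :: 'a and \<kappa> :: complex
  assumes A: "compact A"
  shows "(\<lambda>m. \<kappa>^m / fact m * of_real (integral A (\<lambda>x. (x \<bullet> y)^m))) sums integral A (\<lambda>x. exp (\<kappa> * of_real (x \<bullet> y)))"
proof -
  define f where "f = (\<lambda>N x. \<Sum>m<N. \<kappa>^m / fact m * complex_of_real ((x \<bullet> y)^m))"
  have cy: "continuous_on UNIV (\<lambda>x::'a. x \<bullet> y)" by (intro continuous_intros)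
  obtain B where B: "\<And>x. x \<in> A \<Longrightarrow> \<bar>x \<bullet> y\<bar> \<le> B"
  proof -
    have "compact ((\<lambda>x. x \<bullet> y) ` A)" by (intro compact_continuous_image A continuous_on_subset[OF cy]) auto
    then obtain B where "\<forall>z\<in>(\<lambda>x. x \<bullet> y) ` A. norm z \<le> B" using compact_imp_bounded bounded_iff by metis
    then show ?thesis using that by auto
  qed
  have int_p: "((\<lambda>x. (x \<bullet> y)^m) has_integral integral A (\<lambda>x. (x \<bullet> y)^m)) A" for m
  proof -
    have "(\<lambda>x. (x \<bullet> y)^m) absolutely_integrable_on A"
      by (intro abs_int_compact A continuous_intros)
    then show ?thesis by (simp add: absolutely_integrable_on_def integrable_integral)
  qed
  have hf: "(f N has_integral (\<Sum>m<N. \<kappa>^m / fact m * of_real (integral A (\<lambda>x. (x \<bullet> y)^m)))) A" for N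
    unfolding f_def by (intro has_integral_sum has_integral_mult_right has_integral_of_real int_p) auto
  have lim: "(\<lambda>N. integral A (f N)) \<longlonglongrightarrow> integral A (\<lambda>x. exp (\<kappa> * of_real (x \<bullet> y)))"
  proof (rule dominated_convergence(2))
    show "f N integrable_on A" for N using hf by blast
    show "(\<lambda>x. exp (norm \<kappa> * B)) integrable_on A"
      using A by (intro integrable_on_const lmeasurable_compact)
    show "norm (f N x) \<le> exp (norm \<kappa> * B)" if x: "x \<in> A" for N x
    proof -
      have "norm (f N x) \<le> (\<Sum>m<N. norm (\<kappa>^m / fact m * complex_of_real ((x \<bullet> y)^m)))"
        unfolding f_def by (rule norm_sum)
      also have "\<dots> \<le> (\<Sum>m<N. (norm \<kappa> * B)^m / fact m)"
      proof (intro sum_mono)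
        fix m
        have "\<bar>x \<bullet> y\<bar>^m \<le> B^m" using B[OF x] by (intro power_mono) auto
        then show "norm (\<kappa>^m / fact m * complex_of_real ((x \<bullet> y)^m)) \<le> (norm \<kappa> * B)^m / fact m"
          by (simp add: norm_mult norm_divide norm_power power_mult_distrib power_abs divide_right_mono mult_left_mono)
      qed
      also have "\<dots> \<le> exp (norm \<kappa> * B)"
        using B[OF x] by (intro exp_partial_le mult_nonneg_nonneg) auto
      finally show ?thesis .
    qed
    show "(\<lambda>N. f N x) \<longlonglongrightarrow> exp (\<kappa> * of_real (x \<bullet> y))" if "x \<in> A" for x
    proof -
      have "(\<lambda>n. (\<kappa> * of_real (x \<bullet> y))^n /\<^sub>R fact n) sums exp (\<kappa> * of_real (x \<bullet> y))" by (rule exp_converges)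
      moreover have "(\<kappa> * of_real (x \<bullet> y))^n /\<^sub>R fact n = \<kappa>^n / fact n * complex_of_real ((x \<bullet> y)^n)" for n
        by (simp add: power_mult_distrib scaleR_conv_of_real divide_inverse mult_ac)
      ultimately show ?thesis unfolding f_def sums_def by simp
    qed
  qed
  have "integral A (f N) = (\<Sum>m<N. \<kappa>^m / fact m * of_real (integral A (\<lambda>x. (x \<bullet> y)^m)))" for N
    using hf by (rule integral_unique)
  with lim show ?thesis unfolding sums_def by simp
qed


lemma prod_list_upt: "prod_list (map f [0..<n]) = prod f {..<n}"
  by (induction n) (auto simp: lessThan_Suc mult.commute)

lemma final_alg:
  fixes a H F :: complex and l t :: real
  assumes a: "a \<noteq> 0"
  shows "((-1)^d * of_nat (fact d) / a^(d+1) * of_real l) * (a * H * ((-a) * of_real t)^(k+d) / F)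
       = of_real (fact d * t^d * l) * (((-a) * of_real t)^k * H / F)"
proof -
  define X where "X = (-a) * of_real t"
  have m1: "(-1::complex)^d * (-1)^d = 1" by (simp add: power_mult_distrib[symmetric])
  have m2: "a * a^d / a^(d+1) = 1" using a by simp
  have Xp: "X^(k+d) = X^k * ((-1)^d * a^d * of_real t^d)"
  proof -
    have "(-a)^d = (-1)^d * a^d" by (rule power_minus)
    then have "X^d = (-1)^d * a^d * of_real t^d" unfolding X_def by (simp only: power_mult_distrib)
    then show ?thesis by (simp only: power_add)
  qed
  have "((-1)^d * of_nat (fact d) / a^(d+1) * of_real l) * (a * H * X^(k+d) / F)
      = ((-1)^d * (-1)^d) * (a * a^d / a^(d+1)) * (of_nat (fact d) * of_real l * of_real t^d * (X^k * H / F))"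
    unfolding Xp by (simp only: divide_inverse mult_ac)
  also have "\<dots> = of_real (fact d * t^d * l) * (X^k * H / F)"
    unfolding m1 m2 by (simp add: of_real_mult of_real_power mult_ac)
  finally show ?thesis unfolding X_def .
qed


theorem theorem3:
  fixes v :: "nat \<Rightarrow> real^'n" and S :: "(real^'n) set"
    and t R :: real and y :: "real^'n"
  assumes inj: "inj_on v {..CARD('n)}"
    and indep: "\<not> affine_dependent (v ` {..CARD('n)})"
    and S_def: "S = convex hull (v ` {..CARD('n)})"
    and t_pos: "t > 0"
    and R_gt: "\<forall>j\<le>CARD('n). \<bar>v j \<bullet> y\<bar> < R"
  shows "fourier_char ((\<lambda>x. t *\<^sub>R x) ` S) y =
    ((-1) ^ CARD('n) * of_nat (fact (CARD('n))) / (2 * of_real pi * \<i>) ^ (CARD('n) + 1))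
    * of_real (measure lebesgue S)
    * contour_integral (circlepath 0 R)
        (\<lambda>z. exp (- (2 * of_real pi * \<i>) * z * of_real t)
              / (\<Prod>j\<le>CARD('n). (z - of_real (v j \<bullet> y))))"
proof -
  define d where "d = CARD('n)"
  define w where "w = (\<lambda>j. v j \<bullet> y)"
  obtain bs where sbs: "set bs = (Basis :: (real^'n) set)" and dbs: "distinct bs"
    using finite_distinct_list[OF finite_Basis] by blast
  have len: "length bs = d" using distinct_card[OF dbs] sbs unfolding d_def by simp
  have bij: "bij_betw (\<lambda>i. bs ! i) {..<d} Basis" using bij_betw_nth[OF dbs] len sbs by simp
  define idx where "idx = inv_into {..<d} (\<lambda>i. bs ! i)"
  have idx_nth: "idx (bs ! i) = i" if "i < d" for i
    unfolding idx_def using bij that by (simp add: bij_betw_def inv_into_f_f)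
  have idx_B: "idx b < d" "bs ! (idx b) = b" if "b \<in> Basis" for b
  proof -
    have "b \<in> (\<lambda>i. bs ! i) ` {..<d}" using bij that by (simp add: bij_betw_def)
    then show "idx b < d" "bs ! (idx b) = b" unfolding idx_def
      using inv_into_into[of b "\<lambda>i. bs ! i" "{..<d}"] f_inv_into_f[of b "\<lambda>i. bs ! i" "{..<d}"] by auto
  qed
  define u where "u = (\<lambda>b. v (Suc (idx b)) - v 0)"
  define \<omega> where "\<omega> = (\<lambda>b. w (Suc (idx b)))"
  define Mt where "Mt = (\<lambda>x::real^'n. \<Sum>b\<in>Basis. (x \<bullet> b) *\<^sub>R (t *\<^sub>R u b))"
  define Std where "Std = convex hull (insert 0 (Basis :: (real^'n) set))"
  define tS where "tS = (\<lambda>x. t *\<^sub>R x) ` S"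
  have linMt: "linear Mt" unfolding Mt_def
    by (intro linearI) (auto simp: inner_add_left scaleR_add_left sum.distrib scaleR_sum_right algebra_simps intro!: sum.cong)
  have Mtb: "Mt b = t *\<^sub>R u b" if "b \<in> Basis" for b
  proof -
    have "Mt b = (\<Sum>b'\<in>Basis. (if b' = b then t *\<^sub>R u b' else 0))"
      unfolding Mt_def using that by (intro sum.cong refl) (auto simp: inner_Basis)
    also have "\<dots> = t *\<^sub>R u b" using that by (simp add: sum.delta')
    finally show ?thesis .
  qed
  have cStd: "compact Std" unfolding Std_def by (intro finite_imp_compact_convex_hull) auto
  have pts: "(\<lambda>x. t *\<^sub>R v 0 + x) ` (Mt ` insert 0 Basis) = (\<lambda>x. t *\<^sub>R x) ` (v ` {..d})"
  proof -
    have "(\<lambda>x. t *\<^sub>R v 0 + x) ` (Mt ` insert 0 Basis) = insert (t *\<^sub>R v 0) ((\<lambda>b. t *\<^sub>R v (Suc (idx b))) ` Basis)"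
      using linear_0[OF linMt] Mtb by (auto simp: u_def algebra_simps image_iff)
    also have "(\<lambda>b. t *\<^sub>R v (Suc (idx b))) ` Basis = (\<lambda>j. t *\<^sub>R v j) ` (Suc ` idx ` Basis)"
      by (auto simp: image_image)
    also have "idx ` Basis = {..<d}"
    proof
      show "idx ` Basis \<subseteq> {..<d}" using idx_B by auto
      show "{..<d} \<subseteq> idx ` Basis"
      proof
        fix i assume "i \<in> {..<d}"
        then have "bs ! i \<in> Basis" "idx (bs ! i) = i" using bij idx_nth by (auto simp: bij_betw_def)
        then show "i \<in> idx ` Basis" by force
      qed
    qed
    also have "Suc ` {..<d} = {1..d}" by (rule image_Suc_lessThan)
    also have "insert (t *\<^sub>R v 0) ((\<lambda>j. t *\<^sub>R v j) ` {1..d}) = (\<lambda>x. t *\<^sub>R x) ` (v ` {..d})"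
    proof -
      have "{..d} = insert 0 {1..d}" by auto
      then show ?thesis by (simp add: image_image)
    qed
    finally show ?thesis .
  qed
  have img: "tS = (\<lambda>x. t *\<^sub>R v 0 + Mt x) ` Std"
  proof -
    have "(\<lambda>x. t *\<^sub>R v 0 + Mt x) ` Std = (\<lambda>x. t *\<^sub>R v 0 + x) ` (Mt ` Std)" by (simp add: image_image)
    also have "Mt ` Std = convex hull (Mt ` insert 0 Basis)" unfolding Std_def by (rule convex_hull_linear_image[OF linMt])
    also have "(\<lambda>x. t *\<^sub>R v 0 + x) ` (convex hull (Mt ` insert 0 Basis)) = convex hull ((\<lambda>x. t *\<^sub>R v 0 + x) ` (Mt ` insert 0 Basis))"
      by (rule convex_hull_translation[symmetric])
    also have "\<dots> = convex hull ((\<lambda>x. t *\<^sub>R x) ` (v ` {..d}))" by (simp only: pts)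
    also have "\<dots> = tS" unfolding tS_def S_def d_def by (rule convex_hull_scaling)
    finally show ?thesis by simp
  qed
  have ctS: "compact tS" unfolding img
    by (intro compact_continuous_image cStd continuous_intros linear_continuous_on linear_conv_bounded_linear[THEN iffD1, OF linMt])
  obtain c where c0: "c \<ge> 0" and K: "\<And>T a (f::real^'n \<Rightarrow> real). compact T \<Longrightarrow> continuous_on UNIV f \<Longrightarrow>
           integral ((\<lambda>x. a + Mt x) ` T) f = c * integral T (\<lambda>x. f (a + Mt x))"
    using K_gen[OF linMt] by blast
  have cS: "compact S" unfolding S_def by (intro finite_imp_compact_convex_hull) auto
  have "measure lebesgue tS = integral tS (\<lambda>_. 1)" by (rule lmeasure_integral[OF lmeasurable_compact[OF ctS]])
  also have "\<dots> = c * integral Std (\<lambda>_. 1)" unfolding img by (rule K[OF cStd]) simp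
  also have "integral Std (\<lambda>_. 1) = measure lebesgue Std" by (rule lmeasure_integral[OF lmeasurable_compact[OF cStd], symmetric])
  also have "measure lebesgue Std = measure lborel Std"
    using cStd by (intro measure_completion) (auto dest: compact_imp_closed)
  also have "\<dots> = 1 / fact d" unfolding Std_def d_def by (simp add: content_std_simplex)
  finally have m1: "measure lebesgue tS = c / fact d" by simp
  have "measure lebesgue tS = t^d * measure lebesgue S"
    using measure_lebesgue_affine[of t 0 S] t_pos unfolding tS_def d_def by simp
  with m1 have cval: "c = fact d * t^d * measure lebesgue S" by (simp add: field_simps)
  define H where "H = (\<lambda>m. hl (map w [0..<Suc d]) m)"
  have mapw: "w 0 # map \<omega> bs = map w [0..<Suc d]"
  proof -
    have e2: "map (\<lambda>i. bs ! i) [0..<d] = bs" using map_nth[of bs] len by simp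
    have "map \<omega> bs = map \<omega> (map (\<lambda>i. bs ! i) [0..<d])" by (simp only: e2)
    also have "\<dots> = map (\<lambda>i. \<omega> (bs ! i)) [0..<d]" by simp
    also have "\<dots> = map (\<lambda>i. w (Suc i)) [0..<d]" by (simp add: \<omega>_def idx_nth)
    finally have mw: "map \<omega> bs = map (\<lambda>i. w (Suc i)) [0..<d]" .
    show ?thesis unfolding mw map_upt_Suc by (rule refl)
  qed
  have mom: "integral tS (\<lambda>x. (x \<bullet> y)^m) = c * t^m * (fact m * H m / fact (m + d))" for m
  proof -
    have eqf: "((t *\<^sub>R v 0 + Mt x) \<bullet> y)^m = t^m * (w 0 + (\<Sum>b\<in>Basis. (x \<bullet> b) * (\<omega> b - w 0)))^m" for x
    proof -
      have "(t *\<^sub>R v 0 + Mt x) \<bullet> y = t * (w 0 + (\<Sum>b\<in>Basis. (x \<bullet> b) * (\<omega> b - w 0)))"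
        unfolding Mt_def w_def \<omega>_def u_def
        by (simp add: inner_add_left inner_sum_left inner_diff_left algebra_simps sum_distrib_left)
      then show ?thesis by (simp add: power_mult_distrib)
    qed
    have "integral tS (\<lambda>x. (x \<bullet> y)^m) = c * integral Std (\<lambda>x. ((t *\<^sub>R v 0 + Mt x) \<bullet> y)^m)"
      unfolding img by (rule K[OF cStd]) (intro continuous_intros)
    also have "integral Std (\<lambda>x. ((t *\<^sub>R v 0 + Mt x) \<bullet> y)^m) = t^m * integral Std (\<lambda>x. (w 0 + (\<Sum>b\<in>Basis. (x \<bullet> b) * (\<omega> b - w 0)))^m)"
      unfolding eqf using integral_cmul[of Std "t^m" "\<lambda>x. (w 0 + (\<Sum>b\<in>Basis. (x \<bullet> b) * (\<omega> b - w 0)))^m"] by simp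
    also have "integral Std (\<lambda>x. (w 0 + (\<Sum>b\<in>Basis. (x \<bullet> b) * (\<omega> b - w 0)))^m)
        = (\<integral>x. indicator Std x * (w 0 + (\<Sum>b\<in>Basis. (x \<bullet> b) * (\<omega> b - w 0)))^m \<partial>lborel)"
      by (rule hk_lborel[OF cStd]) (intro continuous_intros)
    also have "\<dots> = fact m * hl (w 0 # map \<omega> bs) m / fact (m + DIM(real^'n))"
      unfolding Std_def by (rule moment_std[OF dbs sbs])
    finally show ?thesis unfolding mapw H_def d_def by simp
  qed
  define \<kappa> :: complex where "\<kappa> = - (2 * of_real pi * \<i>)"
  define T where "T = (\<lambda>m. of_real c * ((\<kappa> * of_real t)^m * of_real (H m) / fact (m + d)))"
  have lhs: "T sums fourier_char tS y"
  proof -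
    have "(\<lambda>m. \<kappa>^m / fact m * of_real (integral tS (\<lambda>x. (x \<bullet> y)^m))) sums integral tS (\<lambda>x. exp (\<kappa> * of_real (x \<bullet> y)))"
      by (rule fourier_series[OF ctS])
    moreover have "\<kappa>^m / fact m * of_real (integral tS (\<lambda>x. (x \<bullet> y)^m)) = T m" for m
    proof -
      have "\<kappa>^m / fact m * of_real (integral tS (\<lambda>x. (x \<bullet> y)^m))
          = \<kappa>^m / fact m * (of_real c * of_real t^m * (fact m * of_real (H m) / fact (m + d)))"
        unfolding mom by (simp add: of_real_mult of_real_divide of_real_power)
      also have "\<dots> = T m" unfolding T_def by (simp add: field_simps power_mult_distrib)
      finally show ?thesis .
    qed
    ultimately show ?thesis unfolding fourier_char_def \<kappa>_def by simp
  qed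
  define ws where "ws = map (\<lambda>j. complex_of_real (w j)) [0..<Suc d]"
  define CI where "CI = contour_integral (circlepath 0 R) (\<lambda>z. exp (- (2 * of_real pi * \<i>) * z * of_real t) / (\<Prod>j\<le>CARD('n). (z - of_real (v j \<bullet> y))))"
  have wsR: "\<forall>a\<in>set ws. norm a < R" unfolding ws_def w_def d_def using R_gt by auto
  have cm: "(\<lambda>k. 2*pi*\<i> * hl ws k * (\<kappa> * of_real t)^(k + length ws - 1) / fact (k + length ws - 1))
           sums contour_integral (circlepath 0 R) (\<lambda>z. exp ((\<kappa> * of_real t)*z) / (\<Prod>a\<leftarrow>ws. (z - a)))"
    by (rule contour_main) (auto simp: ws_def wsR)
  have ciq: "contour_integral (circlepath 0 R) (\<lambda>z. exp ((\<kappa> * of_real t)*z) / (\<Prod>a\<leftarrow>ws. (z - a))) = CI"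
  proof -
    have "(\<Prod>a\<leftarrow>ws. (z - a)) = (\<Prod>j\<le>CARD('n). (z - of_real (v j \<bullet> y)))" for z
    proof -
      have "(\<Prod>a\<leftarrow>ws. (z - a)) = (\<Prod>j\<in>{..<Suc d}. (z - complex_of_real (w j)))"
        unfolding ws_def by (simp only: map_map o_def prod_list_upt)
      then show ?thesis by (simp only: lessThan_Suc_atMost w_def d_def)
    qed
    moreover have "exp ((\<kappa> * of_real t)*z) = exp (- (2 * of_real pi * \<i>) * z * of_real t)" for z
      unfolding \<kappa>_def by (simp add: mult_ac)
    ultimately show ?thesis unfolding CI_def by simp
  qed
  have hws: "hl ws k = of_real (H k)" for k
    unfolding ws_def H_def using hl_of_real[of "map w [0..<Suc d]" k] by (simp add: o_def)
  define K0 where "K0 = ((-1) ^ CARD('n) * of_nat (fact (CARD('n))) / (2 * of_real pi * \<i>) ^ (CARD('n) + 1) :: complex)"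
  have rhs: "(\<lambda>k. (K0 * of_real (measure lebesgue S)) * (2*pi*\<i> * of_real (H k) * (\<kappa> * of_real t)^(k + d) / fact (k + d)))
        sums (K0 * of_real (measure lebesgue S) * CI)"
  proof -
    have "length ws = Suc d" unfolding ws_def by simp
    then have "(\<lambda>k. 2*pi*\<i> * of_real (H k) * (\<kappa> * of_real t)^(k + d) / fact (k + d)) sums CI"
      using cm ciq hws by simp
    then show ?thesis by (rule sums_mult)
  qed
  have eq: "(K0 * of_real (measure lebesgue S)) * (2*pi*\<i> * of_real (H k) * (\<kappa> * of_real t)^(k + d) / fact (k + d)) = T k" for k
  proof -
    have a0: "(2 * of_real pi * \<i> :: complex) \<noteq> 0" by simp
    have "(K0 * of_real (measure lebesgue S)) * (2*pi*\<i> * of_real (H k) * (\<kappa> * of_real t)^(k + d) / fact (k + d))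
        = ((-1)^d * of_nat (fact d) / (2 * of_real pi * \<i>)^(d+1) * of_real (measure lebesgue S))
          * ((2 * of_real pi * \<i>) * of_real (H k) * ((-(2 * of_real pi * \<i>)) * of_real t)^(k+d) / fact (k + d))"
      unfolding K0_def \<kappa>_def d_def by simp
    also have "\<dots> = of_real (fact d * t^d * measure lebesgue S) * (((-(2 * of_real pi * \<i>)) * of_real t)^k * of_real (H k) / fact (k + d))"
      by (rule final_alg[OF a0])
    also have "\<dots> = T k" unfolding T_def cval \<kappa>_def by simp
    finally show ?thesis .
  qed
  have "fourier_char tS y = suminf T" using lhs by (simp add: sums_iff)
  also have "\<dots> = K0 * of_real (measure lebesgue S) * CI" using rhs eq by (simp add: sums_iff)
  finally show ?thesis unfolding tS_def K0_def CI_def .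
qed


end
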